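(* Let $G=(V,E)$ be an infinite, connected, locally finite, vertex-transitive graph such that simple random walk is transient ($g(o,y)<\infty$ for all $y$) but $\sum_{y\in V}g(o,y)^2=\infty$, where $o\in V$ is fixed. Let $(s(x))_{x\in V}$ be i.i.d. real random variables with $\mathbb{E}\,s=1$ and $0<\operatorname{Var}s<\infty$. Then $\mathbb{P}\{s\text{ stabilizes}\}=0$.
   Context: $g(o,y)=\sum_{j\ge0}\mathbb{P}_o(X_j=y)$ is the Green function of simple random walk $(X_j)$ on $G$. $\Delta u(x)=\sum_{y\sim x}(u(y)-u(x))$. $s:V\to\mathbb{R}$ stabilizes if there exists $f:V\to[0,\infty)$ with $s+\Delta f\le1$ pointwise. *)

theory Defs
  imports "HOL-Probability.Probability"
begin

text \<open>Graphs: vertex set = UNIV of type 'v, adjacency relation E.\<close>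

definition simple_graph :: "('v \<Rightarrow> 'v \<Rightarrow> bool) \<Rightarrow> bool" where
  "simple_graph E \<longleftrightarrow> (\<forall>x y. E x y \<longrightarrow> E y x) \<and> (\<forall>x. \<not> E x x)"

definition locally_finite :: "('v \<Rightarrow> 'v \<Rightarrow> bool) \<Rightarrow> bool" where
  "locally_finite E \<longleftrightarrow> (\<forall>x. finite {y. E x y})"

definition connected_graph :: "('v \<Rightarrow> 'v \<Rightarrow> bool) \<Rightarrow> bool" where
  "connected_graph E \<longleftrightarrow> (\<forall>x y. (x, y) \<in> {(u, v). E u v}\<^sup>*)"

definition graph_automorphism :: "('v \<Rightarrow> 'v \<Rightarrow> bool) \<Rightarrow> ('v \<Rightarrow> 'v) \<Rightarrow> bool" where
  "graph_automorphism E \<phi> \<longleftrightarrow> bij \<phi> \<and> (\<forall>u v. E u v \<longleftrightarrow> E (\<phi> u) (\<phi> v))"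

definition vertex_transitive :: "('v \<Rightarrow> 'v \<Rightarrow> bool) \<Rightarrow> bool" where
  "vertex_transitive E \<longleftrightarrow> (\<forall>x y. \<exists>\<phi>. graph_automorphism E \<phi> \<and> \<phi> x = y)"

definition degree :: "('v \<Rightarrow> 'v \<Rightarrow> bool) \<Rightarrow> 'v \<Rightarrow> nat" where
  "degree E x = card {y. E x y}"

definition srw_step :: "('v \<Rightarrow> 'v \<Rightarrow> bool) \<Rightarrow> 'v \<Rightarrow> 'v \<Rightarrow> real" where
  "srw_step E x y = (if E x y then 1 / real (degree E x) else 0)"

fun srw_prob :: "('v \<Rightarrow> 'v \<Rightarrow> bool) \<Rightarrow> nat \<Rightarrow> 'v \<Rightarrow> 'v \<Rightarrow> real" where
  "srw_prob E 0 x y = (if x = y then 1 else 0)"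
| "srw_prob E (Suc j) x y = (\<Sum>z\<in>{z. E x z}. srw_step E x z * srw_prob E j z y)"

text \<open>Green function g(o,y) = sum_j P_o(X_j = y) (meaningful when summable).\<close>
definition green :: "('v \<Rightarrow> 'v \<Rightarrow> bool) \<Rightarrow> 'v \<Rightarrow> 'v \<Rightarrow> real" where
  "green E v0 y = (\<Sum>j. srw_prob E j v0 y)"

definition laplacian :: "('v \<Rightarrow> 'v \<Rightarrow> bool) \<Rightarrow> ('v \<Rightarrow> real) \<Rightarrow> 'v \<Rightarrow> real" where
  "laplacian E u x = (\<Sum>y\<in>{y. E x y}. u y - u x)"

definition stabilizes :: "('v \<Rightarrow> 'v \<Rightarrow> bool) \<Rightarrow> ('v \<Rightarrow> real) \<Rightarrow> bool" where
  "stabilizes E s \<longleftrightarrow> (\<exists>f :: 'v \<Rightarrow> real. (\<forall>x. f x \<ge> 0) \<and> (\<forall>x. s x + laplacian E f x \<le> 1))"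

end

theory Submission
  imports Defs "HOL-Library.Countable_Set"
begin

fun rball :: "('v \<Rightarrow> 'v \<Rightarrow> bool) \<Rightarrow> 'v \<Rightarrow> nat \<Rightarrow> 'v set" where
  "rball E x 0 = {x}"
| "rball E x (Suc j) = (\<Union>z\<in>{z. E x z}. rball E z j)"

fun op :: "('v \<Rightarrow> 'v \<Rightarrow> bool) \<Rightarrow> nat \<Rightarrow> ('v \<Rightarrow> real) \<Rightarrow> 'v \<Rightarrow> real" where
  "op E 0 h x = h x"
| "op E (Suc j) h x = (\<Sum>z\<in>{z. E x z}. srw_step E x z * op E j h z)"

lemma ball_finite: "locally_finite E \<Longrightarrow> finite (rball E x j)"
  by (induction j arbitrary: x) (auto simp: locally_finite_def)

lemma srw_step_nonneg: "srw_step E x z \<ge> 0"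
  by (simp add: srw_step_def)

lemma srw_prob_nonneg: "srw_prob E j x y \<ge> 0"
  by (induction j arbitrary: x) (auto intro!: sum_nonneg mult_nonneg_nonneg srw_step_nonneg)

lemma srw_prob_zero: "y \<notin> rball E x j \<Longrightarrow> srw_prob E j x y = 0"
  by (induction j arbitrary: x) auto

lemma op_rep:
  assumes lf: "locally_finite E"
  shows "op E j h x = (\<Sum>y\<in>rball E x j. srw_prob E j x y * h y)"
proof (induction j arbitrary: x)
  case 0 then show ?case by simp
next
  case (Suc j)
  let ?U = "rball E x (Suc j)"
  have fin: "finite ?U" by (rule ball_finite[OF lf])
  have finN: "finite {z. E x z}" using lf by (auto simp: locally_finite_def)
  have "op E (Suc j) h x = (\<Sum>z\<in>{z. E x z}. srw_step E x z * (\<Sum>y\<in>rball E z j. srw_prob E j z y * h y))"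
    using Suc by simp
  also have "\<dots> = (\<Sum>z\<in>{z. E x z}. srw_step E x z * (\<Sum>y\<in>?U. srw_prob E j z y * h y))"
  proof (rule sum.cong[OF refl])
    fix z assume z: "z \<in> {z. E x z}"
    have sub: "rball E z j \<subseteq> ?U" using z by auto
    have "(\<Sum>y\<in>rball E z j. srw_prob E j z y * h y) = (\<Sum>y\<in>?U. srw_prob E j z y * h y)"
      by (rule sum.mono_neutral_left[OF fin sub]) (auto simp: srw_prob_zero)
    then show "srw_step E x z * (\<Sum>y\<in>rball E z j. srw_prob E j z y * h y) = srw_step E x z * (\<Sum>y\<in>?U. srw_prob E j z y * h y)" by simp
  qed
  also have "\<dots> = (\<Sum>y\<in>?U. (\<Sum>z\<in>{z. E x z}. srw_step E x z * srw_prob E j z y) * h y)"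
    by (simp add: sum_distrib_left sum_distrib_right mult.assoc sum.swap[of _ "{z. E x z}"])
  also have "\<dots> = (\<Sum>y\<in>?U. srw_prob E (Suc j) x y * h y)" by simp
  finally show ?case .
qed

lemma op_add: "op E (a + b) h x = op E a (op E b h) x"
  by (induction a arbitrary: x) auto

lemma op_mono: "(\<And>y. h y \<le> k y) \<Longrightarrow> op E j h x \<le> op E j k x"
  by (induction j arbitrary: x) (auto intro!: sum_mono mult_left_mono srw_step_nonneg)

lemma op_nonneg: "(\<And>y. 0 \<le> h y) \<Longrightarrow> 0 \<le> op E j h x"
  by (induction j arbitrary: x) (auto intro!: sum_nonneg mult_nonneg_nonneg srw_step_nonneg)

lemma op_lin: "op E j (\<lambda>y. c * h y + k y) x = c * op E j h x + op E j k x"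
  by (induction j arbitrary: x) (auto simp: sum_distrib_left sum.distrib algebra_simps)

lemma op_delta:
  assumes lf: "locally_finite E"
  shows "op E j (\<lambda>w. if w = y then 1 else 0) x = srw_prob E j x y"
  using op_rep[OF lf, of j "\<lambda>w. if w = y then 1 else 0" x]
  by (cases "y \<in> rball E x j") (auto simp: srw_prob_zero ball_finite[OF lf] if_distrib cong: if_cong)

lemma ab_le: "(a::real) * b \<le> (a^2 + b^2) / 2"
proof -
  have "0 \<le> (a - b)^2" by simp
  then show ?thesis by (simp add: power2_diff field_simps)
qed

locale rwg =
  fixes E :: "'v \<Rightarrow> 'v \<Rightarrow> bool" and v0 :: 'v
  assumes sg: "simple_graph E" and inf: "infinite (UNIV :: 'v set)" and conn: "connected_graph E"
    and lf: "locally_finite E" and vt: "vertex_transitive E"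
begin

definition "d = degree E v0"

lemma finN: "finite {z. E x z}" using lf by (auto simp: locally_finite_def)

lemma symE: "E x y \<Longrightarrow> E y x" using sg by (auto simp: simple_graph_def)

lemma aut_nbrs:
  assumes "graph_automorphism E \<phi>"
  shows "{z. E (\<phi> x) z} = \<phi> ` {z. E x z}"
proof -
  have b: "bij \<phi>" and e: "\<And>u v. E u v \<longleftrightarrow> E (\<phi> u) (\<phi> v)" using assms by (auto simp: graph_automorphism_def)
  show ?thesis
  proof (intro set_eqI iffI)
    fix z assume "z \<in> {z. E (\<phi> x) z}"
    moreover obtain w where "z = \<phi> w" using b by (metis bij_pointE)
    ultimately show "z \<in> \<phi> ` {z. E x z}" using e by auto
  qed (use e in auto)
qed

lemma deg_const: "degree E x = d"
proof -
  obtain \<phi> where a: "graph_automorphism E \<phi>" and "\<phi> v0 = x" using vt by (auto simp: vertex_transitive_def)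
  then have "{z. E x z} = \<phi> ` {z. E v0 z}" using aut_nbrs by metis
  moreover have "inj \<phi>" using a by (auto simp: graph_automorphism_def bij_def)
  ultimately show ?thesis by (simp add: degree_def d_def card_image inj_on_subset)
qed

lemma dpos: "d > 0"
proof -
  obtain y where "y \<noteq> v0" using inf by (metis UNIV_I finite.simps insertCI subsetI subset_antisym)
  moreover have "(v0, y) \<in> {(u, v). E u v}\<^sup>*" using conn by (auto simp: connected_graph_def)
  ultimately obtain z where "E v0 z" by (metis (no_types, lifting) case_prodD converse_rtranclE mem_Collect_eq)
  then have "{z. E v0 z} \<noteq> {}" by auto
  then show ?thesis using finN[of v0] by (simp add: d_def degree_def card_gt_0_iff)
qed

lemma step_eq: "srw_step E x z = (if E x z then 1 / real d else 0)"
  by (simp add: srw_step_def deg_const)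

lemma step_sym: "srw_step E x z = srw_step E z x"
  using symE by (auto simp: step_eq)

lemma step_zero: "\<not> E y z \<Longrightarrow> srw_step E z y = 0"
  using symE by (auto simp: step_eq)

lemma sum_step: "(\<Sum>z\<in>{z. E x z}. srw_step E x z) = 1"
  using dpos deg_const[of x] by (simp add: step_eq degree_def)

lemma lap: "laplacian E f x = real d * (op E 1 f x - f x)"
proof -
  have "laplacian E f x = (\<Sum>y\<in>{y. E x y}. f y) - real d * f x"
    using deg_const[of x] by (simp add: laplacian_def sum_subtractf degree_def)
  moreover have "op E 1 f x = (\<Sum>y\<in>{y. E x y}. f y) / real d"
    by (simp add: step_eq sum_divide_distrib)
  ultimately show ?thesis using dpos by (simp add: field_simps)
qed

lemma prob_aut:
  assumes a: "graph_automorphism E \<phi>"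
  shows "srw_prob E j (\<phi> x) (\<phi> y) = srw_prob E j x y"
proof (induction j arbitrary: x)
  case 0
  have "inj \<phi>" using a by (auto simp: graph_automorphism_def bij_def)
  then show ?case by (auto dest: injD)
next
  case (Suc j)
  have inj: "inj \<phi>" using a by (auto simp: graph_automorphism_def bij_def)
  have e: "\<And>u v. E u v \<longleftrightarrow> E (\<phi> u) (\<phi> v)" using a by (auto simp: graph_automorphism_def)
  have "srw_prob E (Suc j) (\<phi> x) (\<phi> y) = (\<Sum>z\<in>\<phi> ` {z. E x z}. srw_step E (\<phi> x) z * srw_prob E j z (\<phi> y))"
    using aut_nbrs[OF a] by simp
  also have "\<dots> = (\<Sum>z\<in>{z. E x z}. srw_step E (\<phi> x) (\<phi> z) * srw_prob E j (\<phi> z) (\<phi> y))"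
    by (rule sum.reindex[unfolded comp_def]) (rule inj_on_subset[OF inj], simp)
  also have "\<dots> = (\<Sum>z\<in>{z. E x z}. srw_step E x z * srw_prob E j z y)"
    using Suc e by (simp add: step_eq)
  finally show ?case by simp
qed

lemma prob_diag: "srw_prob E j x x = srw_prob E j v0 v0"
proof -
  obtain \<phi> where a: "graph_automorphism E \<phi>" and "\<phi> v0 = x" using vt by (auto simp: vertex_transitive_def)
  then show ?thesis using prob_aut[OF a, of j v0 v0] by simp
qed

lemma CK: "srw_prob E (a + b) x y = (\<Sum>z\<in>rball E x a. srw_prob E a x z * srw_prob E b z y)"
proof -
  have ext1: "op E b (\<lambda>w. if w = y then 1 else 0) = (\<lambda>z. srw_prob E b z y)"
    by (rule ext) (simp add: op_delta[OF lf])
  have "srw_prob E (a + b) x y = op E (a + b) (\<lambda>w. if w = y then 1 else 0) x"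
    by (simp add: op_delta[OF lf])
  also have "\<dots> = op E a (op E b (\<lambda>w. if w = y then 1 else 0)) x" by (rule op_add)
  also have "\<dots> = op E a (\<lambda>z. srw_prob E b z y) x" by (simp only: ext1)
  also have "\<dots> = (\<Sum>z\<in>rball E x a. srw_prob E a x z * srw_prob E b z y)" by (rule op_rep[OF lf])
  finally show ?thesis .
qed

lemma prob1: "srw_prob E 1 z y = srw_step E z y"
proof -
  have "srw_prob E 1 z y = (\<Sum>w\<in>{w. E z w}. srw_step E z w * (if w = y then 1 else 0))" by simp
  also have "\<dots> = srw_step E z y"
    using finN[of z] by (auto simp: if_distrib step_eq cong: if_cong)
  finally show ?thesis .
qed

lemma prob_sym: "srw_prob E j x y = srw_prob E j y x"
proof (induction j arbitrary: x y)
  case 0 then show ?case by simp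
next
  case (Suc j)
  let ?U = "rball E x j \<union> {z. E y z}"
  have fin: "finite ?U" using ball_finite[OF lf] finN by auto
  have "srw_prob E (j + 1) x y = (\<Sum>z\<in>rball E x j. srw_prob E j x z * srw_step E z y)"
    using CK[of j 1 x y] unfolding prob1 .
  then have "srw_prob E (Suc j) x y = (\<Sum>z\<in>rball E x j. srw_prob E j x z * srw_step E z y)" by simp
  also have "\<dots> = (\<Sum>z\<in>?U. srw_prob E j x z * srw_step E z y)"
    by (rule sum.mono_neutral_left[OF fin]) (auto simp: srw_prob_zero)
  also have "\<dots> = (\<Sum>z\<in>{z. E y z}. srw_prob E j x z * srw_step E z y)"
    by (rule sum.mono_neutral_right[OF fin]) (auto simp: step_zero)
  also have "\<dots> = (\<Sum>z\<in>{z. E y z}. srw_step E y z * srw_prob E j z x)"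
  proof (rule sum.cong[OF refl])
    fix z
    have "srw_prob E j x z = srw_prob E j z x" by (rule Suc.IH)
    moreover have "srw_step E z y = srw_step E y z" by (rule step_sym)
    ultimately show "srw_prob E j x z * srw_step E z y = srw_step E y z * srw_prob E j z x" by simp
  qed
  also have "\<dots> = srw_prob E (Suc j) y x" by simp
  finally show ?case .
qed

lemma sum_step_le: "(\<Sum>z\<in>{z. E x z}. srw_step E x z * h z) \<le> c" if "\<And>z. h z \<le> c"
proof -
  have "(\<Sum>z\<in>{z. E x z}. srw_step E x z * h z) \<le> (\<Sum>z\<in>{z. E x z}. srw_step E x z * c)"
    by (intro sum_mono mult_left_mono that srw_step_nonneg)
  also have "\<dots> = c" using sum_step[of x] by (simp add: sum_distrib_right[symmetric])
  finally show ?thesis .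
qed

lemma even_bound: "srw_prob E (2 * m) x y \<le> srw_prob E (2 * m) v0 v0"
proof -
  let ?U = "rball E x m \<union> rball E y m"
  have fin: "finite ?U" using ball_finite[OF lf] by auto
  have "srw_prob E (2*m) x y = (\<Sum>z\<in>rball E x m. srw_prob E m x z * srw_prob E m z y)"
    using CK[of m m x y] by (simp add: mult_2)
  also have "\<dots> = (\<Sum>z\<in>rball E x m. srw_prob E m x z * srw_prob E m y z)"
    by (simp add: prob_sym[of m _ y])
  also have "\<dots> = (\<Sum>z\<in>?U. srw_prob E m x z * srw_prob E m y z)"
    by (rule sum.mono_neutral_left[OF fin]) (auto simp: srw_prob_zero)
  also have "\<dots> \<le> (\<Sum>z\<in>?U. ((srw_prob E m x z)^2 + (srw_prob E m y z)^2) / 2)"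
    by (intro sum_mono ab_le)
  also have "\<dots> = ((\<Sum>z\<in>?U. srw_prob E m x z * srw_prob E m z x) + (\<Sum>z\<in>?U. srw_prob E m y z * srw_prob E m z y)) / 2"
  proof -
    have "\<And>z. srw_prob E m z x = srw_prob E m x z" "\<And>z. srw_prob E m z y = srw_prob E m y z" by (rule prob_sym)+
    then show ?thesis by (simp add: sum.distrib sum_divide_distrib power2_eq_square add_divide_distrib)
  qed
  also have "(\<Sum>z\<in>?U. srw_prob E m x z * srw_prob E m z x) = srw_prob E (2*m) x x"
  proof -
    have "srw_prob E (2*m) x x = (\<Sum>z\<in>rball E x m. srw_prob E m x z * srw_prob E m z x)"
      using CK[of m m x x] by (simp add: mult_2)
    also have "\<dots> = (\<Sum>z\<in>?U. srw_prob E m x z * srw_prob E m z x)"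
      by (rule sum.mono_neutral_left[OF fin]) (auto simp: srw_prob_zero)
    finally show ?thesis by simp
  qed
  also have "(\<Sum>z\<in>?U. srw_prob E m y z * srw_prob E m z y) = srw_prob E (2*m) y y"
  proof -
    have "srw_prob E (2*m) y y = (\<Sum>z\<in>rball E y m. srw_prob E m y z * srw_prob E m z y)"
      using CK[of m m y y] by (simp add: mult_2)
    also have "\<dots> = (\<Sum>z\<in>?U. srw_prob E m y z * srw_prob E m z y)"
      by (rule sum.mono_neutral_left[OF fin]) (auto simp: srw_prob_zero)
    finally show ?thesis by simp
  qed
  finally show ?thesis using prob_diag[of "2*m" x] prob_diag[of "2*m" y] by (simp add: field_simps)
qed

lemma prob_bound: "srw_prob E j x y \<le> srw_prob E (2 * (j div 2)) v0 v0"
proof (cases "even j")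
  case True then show ?thesis using even_bound[of "j div 2" x y] by simp
next
  case False
  then obtain m where j: "j = Suc (2*m)" by (metis oddE Suc_eq_plus1)
  have "srw_prob E j x y = (\<Sum>z\<in>{z. E x z}. srw_step E x z * srw_prob E (2*m) z y)" using j by simp
  also have "\<dots> \<le> srw_prob E (2*m) v0 v0" by (rule sum_step_le) (rule even_bound)
  finally show ?thesis using j by simp
qed

end

lemma op_lin2: "op E j (\<lambda>y. c * h y + c' * k y) x = c * op E j h x + c' * op E j k x"
  by (induction j arbitrary: x) (auto simp: sum_distrib_left sum.distrib algebra_simps)

context rwg begin

definition UB :: "nat \<Rightarrow> 'v set" where "UB n = (\<Union>j<n. rball E v0 j)"
definition wt :: "nat \<Rightarrow> 'v \<Rightarrow> real" where "wt n y = (\<Sum>j<n. srw_prob E j v0 y)"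

lemma UB_finite: "finite (UB n)" using ball_finite[OF lf] by (auto simp: UB_def)

lemma wt_nonneg: "wt n y \<ge> 0" by (auto simp: wt_def intro!: sum_nonneg srw_prob_nonneg)

lemma wt_zero: "y \<notin> UB n \<Longrightarrow> wt n y = 0"
  by (auto simp: wt_def UB_def intro!: sum.neutral srw_prob_zero)

lemma sum_op: "(\<Sum>j<n. op E j h v0) = (\<Sum>y\<in>UB n. wt n y * h y)"
proof -
  have "(\<Sum>j<n. op E j h v0) = (\<Sum>j<n. \<Sum>y\<in>UB n. srw_prob E j v0 y * h y)"
  proof (rule sum.cong[OF refl])
    fix j assume j: "j \<in> {..<n}"
    have sub: "rball E v0 j \<subseteq> UB n" using j by (auto simp: UB_def)
    show "op E j h v0 = (\<Sum>y\<in>UB n. srw_prob E j v0 y * h y)"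
      unfolding op_rep[OF lf] by (rule sum.mono_neutral_left[OF UB_finite sub]) (auto simp: srw_prob_zero)
  qed
  also have "\<dots> = (\<Sum>y\<in>UB n. wt n y * h y)"
    by (subst sum.swap) (simp add: wt_def sum_distrib_right)
  finally show ?thesis .
qed

lemma det_ineq:
  assumes f0: "\<And>x. f x \<ge> 0" and st: "\<And>x. s x + laplacian E f x \<le> 1"
  shows "(\<Sum>y\<in>UB n. wt n y * (s y - 1)) \<le> real d * f v0"
proof -
  have pt: "s y - 1 \<le> real d * f y + (- real d) * op E 1 f y" for y
    using st[of y] lap[of f y] by (simp add: algebra_simps)
  have "(\<Sum>y\<in>UB n. wt n y * (s y - 1)) = (\<Sum>j<n. op E j (\<lambda>y. s y - 1) v0)"
    by (rule sum_op[symmetric])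
  also have "\<dots> \<le> (\<Sum>j<n. real d * op E j f v0 + (- real d) * op E (Suc j) f v0)"
  proof (rule sum_mono)
    fix j
    have "op E j (\<lambda>y. s y - 1) v0 \<le> op E j (\<lambda>y. real d * f y + (- real d) * op E 1 f y) v0"
      by (rule op_mono) (rule pt)
    also have "\<dots> = real d * op E j f v0 + (- real d) * op E j (op E 1 f) v0" by (rule op_lin2)
    also have "op E j (op E 1 f) v0 = op E (Suc j) f v0" using op_add[of E j 1 f v0] by simp
    finally show "op E j (\<lambda>y. s y - 1) v0 \<le> real d * op E j f v0 + (- real d) * op E (Suc j) f v0" .
  qed
  also have "\<dots> = real d * (\<Sum>j<n. op E j f v0 - op E (Suc j) f v0)"
    by (simp add: sum_distrib_left right_diff_distrib del: op.simps)
  also have "\<dots> = real d * (f v0 - op E n f v0)"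
    by (subst sum_lessThan_telescope') (simp del: op.simps add: op.simps(1))
  also have "\<dots> \<le> real d * f v0"
    using op_nonneg[of f E n v0] f0 by (simp add: mult_left_mono)
  finally show ?thesis .
qed

definition cb :: real where "cb = 3 * green E v0 v0 + 1"

lemma wt_bound:
  assumes tr: "summable (\<lambda>j. srw_prob E j v0 v0)"
  shows "wt n y \<le> cb"
proof -
  let ?q = "\<lambda>k. srw_prob E k v0 v0"
  have g: "(\<Sum>k<m. ?q k) \<le> green E v0 v0" for m
    unfolding green_def by (rule sum_le_suminf[OF tr]) (auto simp: srw_prob_nonneg)
  have "wt n y \<le> (\<Sum>j<n. ?q j + (if j = 0 then 0 else ?q (j - 1)))"
    unfolding wt_def
  proof (rule sum_mono)
    fix j
    have "srw_prob E j v0 y \<le> ?q (2 * (j div 2))" by (rule prob_bound)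
    also have "\<dots> \<le> ?q j + (if j = 0 then 0 else ?q (j - 1))"
    proof (cases "even j")
      case True then show ?thesis by (auto simp: srw_prob_nonneg)
    next
      case False
      then have "2 * (j div 2) = j - 1" "j \<noteq> 0" by presburger+
      then show ?thesis by (auto simp: srw_prob_nonneg)
    qed
    finally show "srw_prob E j v0 y \<le> ?q j + (if j = 0 then 0 else ?q (j - 1))" .
  qed
  also have "\<dots> = (\<Sum>j<n. ?q j) + (\<Sum>j<n. (if j = 0 then 0 else ?q (j - 1)))"
    by (rule sum.distrib)
  also have "(\<Sum>j<n. (if j = 0 then 0 else ?q (j - 1))) \<le> green E v0 v0"
  proof (cases n)
    case 0 then show ?thesis using g[of 0] by simp
  next
    case (Suc m)
    have "(\<Sum>j<n. (if j = 0 then 0 else ?q (j - 1))) = (\<Sum>j<m. ?q j)"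
      unfolding Suc sum.lessThan_Suc_shift by simp
    then show ?thesis using g[of m] by simp
  qed
  finally show ?thesis using g[of n] green_def
    by (smt (verit) cb_def g srw_prob_nonneg sum_nonneg)
qed

lemma green_nonneg: "summable (\<lambda>j. srw_prob E j v0 y) \<Longrightarrow> green E v0 y \<ge> 0"
  unfolding green_def by (rule suminf_nonneg) (auto simp: srw_prob_nonneg)

definition VV :: "nat \<Rightarrow> real" where "VV n = (\<Sum>y\<in>UB n. (wt n y)^2)"

lemma VV_unbounded:
  assumes tr: "\<forall>y. summable (\<lambda>j. srw_prob E j v0 y)"
    and ns: "\<not> ((\<lambda>y. (green E v0 y)\<^sup>2) summable_on UNIV)"
  shows "\<exists>n. VV n > C"
proof (rule ccontr)
  assume "\<not> ?thesis"
  then have bd: "VV n \<le> C" for n by (simp add: not_less)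
  have "(\<lambda>y. (green E v0 y)\<^sup>2) summable_on UNIV"
  proof (rule nonneg_bdd_above_summable_on)
    show "bdd_above (sum (\<lambda>y. (green E v0 y)\<^sup>2) ` {F. F \<subseteq> UNIV \<and> finite F})"
    proof (rule bdd_aboveI2)
      fix F :: "'v set" assume "F \<in> {F. F \<subseteq> UNIV \<and> finite F}"
      then have fin: "finite F" by simp
      have lim: "(\<lambda>n. \<Sum>y\<in>F. (wt n y)^2) \<longlonglongrightarrow> (\<Sum>y\<in>F. (green E v0 y)^2)"
        unfolding wt_def green_def
        by (intro tendsto_sum tendsto_power summable_LIMSEQ) (use tr in auto)
      have le: "(\<Sum>y\<in>F. (wt n y)^2) \<le> C" for n
      proof -
        have "(\<Sum>y\<in>F. (wt n y)^2) = (\<Sum>y\<in>F \<inter> UB n. (wt n y)^2)"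
          by (rule sum.mono_neutral_right[OF fin]) (auto simp: wt_zero)
        also have "\<dots> \<le> VV n" unfolding VV_def
          by (rule sum_mono2[OF UB_finite]) auto
        finally show ?thesis using bd[of n] by simp
      qed
      show "(\<Sum>y\<in>F. (green E v0 y)^2) \<le> C"
        by (rule LIMSEQ_le_const2[OF lim]) (use le in auto)
    qed
  qed simp
  with ns show False by simp
qed

end

lemma exp_quad_bounds:
  fixes u :: real assumes "\<bar>u\<bar> \<le> 1/2"
  shows "1 + u + u^2/4 \<le> exp u" and "exp u \<le> 1 + u + u^2"
proof -
  obtain t where t: "\<bar>t\<bar> \<le> \<bar>u\<bar>" and e: "exp u = (\<Sum>m<3. u ^ m / fact m) + exp t / fact 3 * u ^ 3"
    using Maclaurin_exp_le[of u 3] by blast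
  have e2: "exp u = 1 + u + u^2/2 + exp t / 6 * u^3"
    using e by (simp add: numeral_3_eq_3 fact_numeral eval_nat_numeral)
  have et: "exp t \<le> 2"
  proof -
    have "exp t \<le> exp (1/2)" using t assms by simp
    also have "\<dots> \<le> 2" using exp_bound_half[of "1/2::real"] by simp
    finally show ?thesis .
  qed
  have "\<bar>exp t / 6 * u^3\<bar> = exp t / 6 * (\<bar>u\<bar> * u^2)"
    by (simp add: abs_mult power_abs power3_eq_cube power2_eq_square)
  also have "\<dots> \<le> 2 / 6 * (\<bar>u\<bar> * u^2)"
  proof -
    have "exp t / 6 \<le> 2 / 6" using et by simp
    moreover have "0 \<le> \<bar>u\<bar> * u^2" by simp
    ultimately show ?thesis by (rule mult_right_mono)
  qed
  also have "\<dots> \<le> 2/6 * (1/2 * u^2)"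
    using assms by (intro mult_left_mono mult_right_mono) auto
  finally have r: "\<bar>exp t / 6 * u^3\<bar> \<le> u^2/6" by simp
  show "1 + u + u^2/4 \<le> exp u" using e2 r zero_le_power2[of u] by (simp add: abs_le_iff)
  show "exp u \<le> 1 + u + u^2" using e2 r zero_le_power2[of u] by (simp add: abs_le_iff)
qed

lemma prod_ge_sum: "finite U \<Longrightarrow> (\<And>y. y \<in> U \<Longrightarrow> (0::real) \<le> x y) \<Longrightarrow> 1 + (\<Sum>y\<in>U. x y) \<le> (\<Prod>y\<in>U. 1 + x y)"
proof (induction U rule: finite_induct)
  case empty then show ?case by simp
next
  case (insert a F)
  have h: "1 + sum x F \<le> prod (\<lambda>y. 1 + x y) F" using insert by auto
  have xa: "0 \<le> x a" using insert by auto
  have sF: "0 \<le> sum x F" using insert by (auto intro!: sum_nonneg)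
  have "1 + sum x (insert a F) = 1 + x a + sum x F" using insert by simp
  also have "\<dots> \<le> (1 + x a) * (1 + sum x F)" using xa sF by (simp add: algebra_simps)
  also have "\<dots> \<le> (1 + x a) * prod (\<lambda>y. 1 + x y) F" using h xa by (intro mult_left_mono) auto
  finally show ?case using insert by simp
qed

lemma ab_le2: "(a::real) * b \<le> (a^2 + b^2) / 2"
proof -
  have "0 \<le> (a - b)^2" by simp
  then show ?thesis by (simp add: power2_diff field_simps)
qed

locale pset = prob_space M for M :: "'w measure" +
  fixes s :: "'v \<Rightarrow> 'w \<Rightarrow> real" and v0 :: 'v
  assumes meas: "\<And>x. s x \<in> borel_measurable M"
    and ind: "indep_vars (\<lambda>_. borel) s UNIV"
    and dst: "\<And>x. distr M borel (s x) = distr M borel (s v0)"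
    and int1: "integrable M (s v0)" and mean1: "expectation (s v0) = 1"
    and int2: "integrable M (\<lambda>\<omega>. (s v0 \<omega>)\<^sup>2)" and vpos: "variance (s v0) > 0"
begin

lemmas [measurable] = meas

lemma transfer_int:
  fixes h :: "real \<Rightarrow> real"
  assumes [measurable]: "h \<in> borel_measurable borel"
  shows "integrable M (\<lambda>\<omega>. h (s y \<omega>)) = integrable M (\<lambda>\<omega>. h (s v0 \<omega>))"
  using integrable_distr_eq[of "s y" M borel h] integrable_distr_eq[of "s v0" M borel h] dst[of y] by simp

lemma transfer_integral:
  fixes h :: "real \<Rightarrow> real"
  assumes [measurable]: "h \<in> borel_measurable borel"
  shows "(\<integral>\<omega>. h (s y \<omega>) \<partial>M) = (\<integral>\<omega>. h (s v0 \<omega>) \<partial>M)"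
  using integral_distr[of "s y" M borel h] integral_distr[of "s v0" M borel h] dst[of y] by simp

lemma indep_h:
  fixes h :: "'v \<Rightarrow> real \<Rightarrow> real"
  assumes "\<And>y. h y \<in> borel_measurable borel"
  shows "indep_vars (\<lambda>_. borel) (\<lambda>y \<omega>. h y (s y \<omega>)) UNIV"
  by (rule indep_vars_compose2[OF ind]) (use assms in auto)

lemma prod_integral:
  fixes h :: "'v \<Rightarrow> real \<Rightarrow> real"
  assumes "finite U" and hm: "\<And>y. h y \<in> borel_measurable borel"
    and hi: "\<And>y. y \<in> U \<Longrightarrow> integrable M (\<lambda>\<omega>. h y (s y \<omega>))"
  shows "(\<integral>\<omega>. (\<Prod>y\<in>U. h y (s y \<omega>)) \<partial>M) = (\<Prod>y\<in>U. \<integral>\<omega>. h y (s y \<omega>) \<partial>M)"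
    and "integrable M (\<lambda>\<omega>. (\<Prod>y\<in>U. h y (s y \<omega>)))"
proof -
  have iv: "indep_vars (\<lambda>_. borel) (\<lambda>y \<omega>. h y (s y \<omega>)) U"
    by (rule indep_vars_subset[OF indep_h[OF hm]]) auto
  show "(\<integral>\<omega>. (\<Prod>y\<in>U. h y (s y \<omega>)) \<partial>M) = (\<Prod>y\<in>U. \<integral>\<omega>. h y (s y \<omega>) \<partial>M)"
    by (rule indep_vars_lebesgue_integral[OF assms(1) iv hi])
  show "integrable M (\<lambda>\<omega>. (\<Prod>y\<in>U. h y (s y \<omega>)))"
    by (rule indep_vars_integrable[OF assms(1) iv hi])
qed

lemma var_sum:
  fixes g :: "real \<Rightarrow> real"
  assumes gm[measurable]: "g \<in> borel_measurable borel"
    and g2: "integrable M (\<lambda>\<omega>. (g (s v0 \<omega>))^2)" and g0: "(\<integral>\<omega>. g (s v0 \<omega>) \<partial>M) = 0"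
    and U: "finite U"
  shows "integrable M (\<lambda>\<omega>. (\<Sum>y\<in>U. b y * g (s y \<omega>))^2)"
    and "(\<integral>\<omega>. (\<Sum>y\<in>U. b y * g (s y \<omega>))^2 \<partial>M) = (\<Sum>y\<in>U. (b y)^2) * (\<integral>\<omega>. (g (s v0 \<omega>))^2 \<partial>M)"
proof -
  have g2y: "integrable M (\<lambda>\<omega>. (g (s y \<omega>))^2)" for y
    using transfer_int[of "\<lambda>u. (g u)^2" y] g2 by simp
  have g1y: "integrable M (\<lambda>\<omega>. g (s y \<omega>))" for y
    by (rule square_integrable_imp_integrable[OF _ g2y]) simp
  have cross: "integrable M (\<lambda>\<omega>. g (s y \<omega>) * g (s z \<omega>)) \<and>
      (\<integral>\<omega>. g (s y \<omega>) * g (s z \<omega>) \<partial>M) = (if y = z then (\<integral>\<omega>. (g (s v0 \<omega>))^2 \<partial>M) else 0)" for y z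
  proof (cases "y = z")
    case True
    then show ?thesis using g2y[of y] transfer_integral[of "\<lambda>u. (g u)^2" y]
      by (simp add: power2_eq_square)
  next
    case False
    have pi: "(\<integral>\<omega>. (\<Prod>i\<in>{y,z}. g (s i \<omega>)) \<partial>M) = (\<Prod>i\<in>{y,z}. \<integral>\<omega>. g (s i \<omega>) \<partial>M)"
      and pint: "integrable M (\<lambda>\<omega>. (\<Prod>i\<in>{y,z}. g (s i \<omega>)))"
      using prod_integral[of "{y,z}" "\<lambda>_. g"] g1y by auto
    have "(\<integral>\<omega>. g (s y \<omega>) \<partial>M) = 0" using transfer_integral[of g y] g0 by simp
    then show ?thesis using pi pint False by simp
  qed
  have expand: "(\<Sum>y\<in>U. b y * g (s y \<omega>))^2 = (\<Sum>y\<in>U. \<Sum>z\<in>U. b y * b z * (g (s y \<omega>) * g (s z \<omega>)))" for \<omega>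
    by (simp add: power2_eq_square sum_product mult_ac)
  have intc: "integrable M (\<lambda>\<omega>. g (s y \<omega>) * g (s z \<omega>))" for y z using cross by blast
  have intyz: "integrable M (\<lambda>\<omega>. b y * b z * (g (s y \<omega>) * g (s z \<omega>)))" for y z
    by (rule integrable_mult_right) (rule intc)
  have inty: "integrable M (\<lambda>\<omega>. \<Sum>z\<in>U. b y * b z * (g (s y \<omega>) * g (s z \<omega>)))" for y
    by (rule Bochner_Integration.integrable_sum) (rule intyz)
  show "integrable M (\<lambda>\<omega>. (\<Sum>y\<in>U. b y * g (s y \<omega>))^2)"
    unfolding expand by (rule Bochner_Integration.integrable_sum) (rule inty)
  have "(\<integral>\<omega>. (\<Sum>y\<in>U. b y * g (s y \<omega>))^2 \<partial>M) = (\<Sum>y\<in>U. \<integral>\<omega>. (\<Sum>z\<in>U. b y * b z * (g (s y \<omega>) * g (s z \<omega>))) \<partial>M)"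
    unfolding expand by (rule Bochner_Integration.integral_sum) (rule inty)
  also have "\<dots> = (\<Sum>y\<in>U. \<Sum>z\<in>U. b y * b z * (\<integral>\<omega>. g (s y \<omega>) * g (s z \<omega>) \<partial>M))"
  proof (rule sum.cong[OF refl])
    fix y
    show "(\<integral>\<omega>. (\<Sum>z\<in>U. b y * b z * (g (s y \<omega>) * g (s z \<omega>))) \<partial>M) = (\<Sum>z\<in>U. b y * b z * (\<integral>\<omega>. g (s y \<omega>) * g (s z \<omega>) \<partial>M))"
      by (subst Bochner_Integration.integral_sum) (simp_all only: intyz Bochner_Integration.integral_mult_right_zero)
  qed
  also have "\<dots> = (\<Sum>y\<in>U. (b y)^2 * (\<integral>\<omega>. (g (s v0 \<omega>))^2 \<partial>M))"
  proof (rule sum.cong[OF refl])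
    fix y assume y: "y \<in> U"
    have "(\<Sum>z\<in>U. b y * b z * (\<integral>\<omega>. g (s y \<omega>) * g (s z \<omega>) \<partial>M))
        = (\<Sum>z\<in>U. (if y = z then b y * b z * (\<integral>\<omega>. (g (s v0 \<omega>))^2 \<partial>M) else 0))"
      by (rule sum.cong[OF refl]) (simp only: cross, simp)
    also have "\<dots> = b y * b y * (\<integral>\<omega>. (g (s v0 \<omega>))^2 \<partial>M)"
      using U y by (simp add: sum.delta)
    finally show "(\<Sum>z\<in>U. b y * b z * (\<integral>\<omega>. g (s y \<omega>) * g (s z \<omega>) \<partial>M)) = (b y)^2 * (\<integral>\<omega>. (g (s v0 \<omega>))^2 \<partial>M)"
      by (simp add: power2_eq_square)
  qed
  finally show "(\<integral>\<omega>. (\<Sum>y\<in>U. b y * g (s y \<omega>))^2 \<partial>M) = (\<Sum>y\<in>U. (b y)^2) * (\<integral>\<omega>. (g (s v0 \<omega>))^2 \<partial>M)"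
    by (simp add: sum_distrib_right)
qed

end

definition trc :: "real \<Rightarrow> real \<Rightarrow> real" where "trc L u = (if \<bar>u - 1\<bar> \<le> L then u - 1 else 0)"
definition wvc :: "real \<Rightarrow> real \<Rightarrow> real" where "wvc L u = (if \<bar>u - 1\<bar> \<le> L then 0 else u - 1)"

lemma trc_meas[measurable]: "trc L \<in> borel_measurable borel" unfolding trc_def by measurable
lemma wvc_meas[measurable]: "wvc L \<in> borel_measurable borel" unfolding wvc_def by measurable
lemma trc_wvc: "trc L u + wvc L u = u - 1" by (simp add: trc_def wvc_def)
lemma trc_wvc2: "(trc L u)^2 + (wvc L u)^2 = (u - 1)^2" by (simp add: trc_def wvc_def)
lemma trc_bd: "\<bar>trc L u\<bar> \<le> \<bar>L\<bar>" by (simp add: trc_def)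
lemma trc_sq: "(trc L u)^2 \<le> L^2" using trc_bd[of L u] abs_le_square_iff by blast
lemma wvc_le: "(wvc L u)^2 \<le> (u - 1)^2" by (simp add: wvc_def)

context pset begin

definition "sig2 = variance (s v0)"
definition "mT L = (\<integral>\<omega>. trc L (s v0 \<omega>) \<partial>M)"
definition "mW L = (\<integral>\<omega>. wvc L (s v0 \<omega>) \<partial>M)"
definition "tau L = (\<integral>\<omega>. (wvc L (s v0 \<omega>))^2 \<partial>M)"

lemma int_sq: "integrable M (\<lambda>\<omega>. (s v0 \<omega> - 1)^2)"
proof -
  have "(\<lambda>\<omega>. (s v0 \<omega> - 1)^2) = (\<lambda>\<omega>. (s v0 \<omega>)^2 - 2 * s v0 \<omega> + 1)"
    by (rule ext) (simp add: power2_diff)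
  then show ?thesis using int1 int2 by simp
qed

lemma int_X: "integrable M (\<lambda>\<omega>. s v0 \<omega> - 1)" using int1 by simp

lemma EX0: "(\<integral>\<omega>. s v0 \<omega> - 1 \<partial>M) = 0"
  using int1 mean1 by (simp add: prob_space)

lemma sig2_eq: "sig2 = (\<integral>\<omega>. (s v0 \<omega> - 1)^2 \<partial>M)"
  unfolding sig2_def using mean1 by simp

lemma sig2_pos: "sig2 > 0" using vpos sig2_def by simp

lemma int_trc: "integrable M (\<lambda>\<omega>. trc L (s v0 \<omega>))"
  by (rule integrable_const_bound[where B="\<bar>L\<bar>"]) (auto simp: trc_bd)
lemma int_trc2: "integrable M (\<lambda>\<omega>. (trc L (s v0 \<omega>))^2)"
  by (rule integrable_const_bound[where B="L^2"]) (auto simp: trc_sq)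
lemma int_wvc2: "integrable M (\<lambda>\<omega>. (wvc L (s v0 \<omega>))^2)"
  by (rule Bochner_Integration.integrable_bound[OF int_sq]) (auto simp: wvc_le)
lemma int_wvc: "integrable M (\<lambda>\<omega>. wvc L (s v0 \<omega>))"
  by (rule square_integrable_imp_integrable[OF _ int_wvc2]) simp

lemma mT_mW: "mT L + mW L = 0"
proof -
  have "mT L + mW L = (\<integral>\<omega>. trc L (s v0 \<omega>) + wvc L (s v0 \<omega>) \<partial>M)"
    unfolding mT_def mW_def using int_trc int_wvc by simp
  also have "\<dots> = 0" unfolding trc_wvc by (rule EX0)
  finally show ?thesis .
qed

lemma sig2_split: "sig2 = (\<integral>\<omega>. (trc L (s v0 \<omega>))^2 \<partial>M) + tau L"
proof -
  have "sig2 = (\<integral>\<omega>. (trc L (s v0 \<omega>))^2 + (wvc L (s v0 \<omega>))^2 \<partial>M)"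
    unfolding sig2_eq trc_wvc2 ..
  also have "\<dots> = (\<integral>\<omega>. (trc L (s v0 \<omega>))^2 \<partial>M) + tau L"
    unfolding tau_def using int_trc2 int_wvc2 by simp
  finally show ?thesis .
qed

lemma tau_nonneg: "tau L \<ge> 0" unfolding tau_def by simp

lemma mW_sq: "(mW L)^2 \<le> tau L"
  using variance_positive[of "\<lambda>\<omega>. wvc L (s v0 \<omega>)"] variance_eq[OF int_wvc int_wvc2]
  by (simp add: mW_def tau_def)

definition "rho2 L = (\<integral>\<omega>. (trc L (s v0 \<omega>) - mT L)^2 \<partial>M)"

lemma rho2_eq: "rho2 L = (\<integral>\<omega>. (trc L (s v0 \<omega>))^2 \<partial>M) - (mT L)^2"
  using variance_eq[OF int_trc int_trc2] by (simp add: rho2_def mT_def)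

lemma rho2_bounds: "sig2 - 2 * tau L \<le> rho2 L" "rho2 L \<le> sig2"
proof -
  have "(mT L)^2 = (mW L)^2" using mT_mW[of L] by (simp add: eq_neg_iff_add_eq_0[symmetric])
  then show "sig2 - 2 * tau L \<le> rho2 L" "rho2 L \<le> sig2"
    using rho2_eq[of L] sig2_split[of L] mW_sq[of L] tau_nonneg[of L] zero_le_power2[of "mT L"] by linarith+
qed

lemma zvar: "(\<integral>\<omega>. (wvc L (s v0 \<omega>) - mW L)^2 \<partial>M) \<le> tau L"
  using variance_eq[OF int_wvc int_wvc2] zero_le_power2[of "mW L"]
  by (simp add: mW_def tau_def)

lemma tau_small: "\<exists>L\<ge>1. tau L \<le> e" if e: "e > 0"
proof -
  let ?f = "\<lambda>i \<omega>. (wvc (real i) (s v0 \<omega>))^2"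
  have lim: "(\<lambda>i. \<integral>\<omega>. ?f i \<omega> \<partial>M) \<longlonglongrightarrow> (\<integral>\<omega>. 0 \<partial>M)"
  proof (rule integral_dominated_convergence[where w="\<lambda>\<omega>. (s v0 \<omega> - 1)^2"])
    show "AE \<omega> in M. (\<lambda>i. ?f i \<omega>) \<longlonglongrightarrow> 0"
    proof (rule AE_I2)
      fix \<omega>
      have "eventually (\<lambda>i. ?f i \<omega> = 0) sequentially"
      proof (rule eventually_sequentiallyI[of "nat \<lceil>\<bar>s v0 \<omega> - 1\<bar>\<rceil>"])
        fix i assume "nat \<lceil>\<bar>s v0 \<omega> - 1\<bar>\<rceil> \<le> i"
        then have "\<bar>s v0 \<omega> - 1\<bar> \<le> real i" by linarith
        then show "?f i \<omega> = 0" by (simp add: wvc_def)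
      qed
      then show "(\<lambda>i. ?f i \<omega>) \<longlonglongrightarrow> 0" by (rule tendsto_eventually)
    qed
    show "AE \<omega> in M. norm (?f i \<omega>) \<le> (s v0 \<omega> - 1)^2" for i by (simp add: wvc_le)
  qed (use int_sq in auto)
  then have "(\<lambda>i. tau (real i)) \<longlonglongrightarrow> 0" by (simp add: tau_def)
  then obtain N where N: "\<And>i. i \<ge> N \<Longrightarrow> \<bar>tau (real i)\<bar> < e"
    using e by (metis LIMSEQ_D real_norm_def diff_zero)
  have "\<bar>tau (real (max N 1))\<bar> < e" by (rule N) simp
  then have "tau (real (max N 1)) \<le> e" by simp
  moreover have "real (max N 1) \<ge> 1" by simp
  ultimately show ?thesis by blast
qed

end

context pset begin


lemma mgf_bounds:
  fixes g :: "real \<Rightarrow> real" and c :: "'v \<Rightarrow> real"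
  assumes gm[measurable]: "g \<in> borel_measurable borel" and gb: "\<And>u. \<bar>g u\<bar> \<le> B"
    and g0: "(\<integral>\<omega>. g (s v0 \<omega>) \<partial>M) = 0" and U: "finite U"
    and cB: "\<And>y. y \<in> U \<Longrightarrow> \<bar>c y\<bar> * B \<le> 1/2"
  shows "integrable M (\<lambda>\<omega>. exp (\<Sum>y\<in>U. c y * g (s y \<omega>)))"
    and "1 + (\<Sum>y\<in>U. (c y)^2) * (\<integral>\<omega>. (g (s v0 \<omega>))^2 \<partial>M) / 4 \<le> (\<integral>\<omega>. exp (\<Sum>y\<in>U. c y * g (s y \<omega>)) \<partial>M)"
    and "(\<integral>\<omega>. exp (\<Sum>y\<in>U. c y * g (s y \<omega>)) \<partial>M) \<le> exp ((\<Sum>y\<in>U. (c y)^2) * (\<integral>\<omega>. (g (s v0 \<omega>))^2 \<partial>M))"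
proof -
  define G2 where "G2 = (\<integral>\<omega>. (g (s v0 \<omega>))^2 \<partial>M)"
  define h where "h y u = exp (c y * g u)" for y u
  have hm[measurable]: "h y \<in> borel_measurable borel" for y unfolding h_def by measurable
  have hb: "\<bar>h y u\<bar> \<le> exp (\<bar>c y\<bar> * B)" for y u
  proof -
    have "c y * g u \<le> \<bar>c y * g u\<bar>" by simp
    also have "\<dots> = \<bar>c y\<bar> * \<bar>g u\<bar>" by (simp add: abs_mult)
    also have "\<dots> \<le> \<bar>c y\<bar> * B" by (rule mult_left_mono[OF gb]) simp
    finally have "c y * g u \<le> \<bar>c y\<bar> * B" .
    then show ?thesis by (simp add: h_def)
  qed
  have hi: "integrable M (\<lambda>\<omega>. h y (s y \<omega>))" for y
    by (rule integrable_const_bound[where B="exp (\<bar>c y\<bar> * B)"]) (use hb in auto)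
  have eq: "exp (\<Sum>y\<in>U. c y * g (s y \<omega>)) = (\<Prod>y\<in>U. h y (s y \<omega>))" for \<omega>
    by (simp add: h_def exp_sum[OF U])
  have PI: "(\<integral>\<omega>. (\<Prod>y\<in>U. h y (s y \<omega>)) \<partial>M) = (\<Prod>y\<in>U. \<integral>\<omega>. h y (s y \<omega>) \<partial>M)"
    and PIi: "integrable M (\<lambda>\<omega>. (\<Prod>y\<in>U. h y (s y \<omega>)))"
    using prod_integral[OF U hm hi] by auto
  show "integrable M (\<lambda>\<omega>. exp (\<Sum>y\<in>U. c y * g (s y \<omega>)))" unfolding eq by (rule PIi)
  have gi: "integrable M (\<lambda>\<omega>. g (s v0 \<omega>))"
    by (rule integrable_const_bound[where B=B]) (use gb in auto)
  have g2i: "integrable M (\<lambda>\<omega>. (g (s v0 \<omega>))^2)"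
  proof -
    have gsq: "(g u)^2 \<le> B^2" for u
    proof -
      have "\<bar>g u\<bar> \<le> \<bar>B\<bar>" using gb[of u] by linarith
      then show ?thesis using abs_le_square_iff by blast
    qed
    show ?thesis by (rule integrable_const_bound[where B="B^2"]) (use gsq in auto)
  qed
  have G2nn: "G2 \<ge> 0" unfolding G2_def by simp
  have fac: "1 + (c y)^2 * G2 / 4 \<le> (\<integral>\<omega>. h y (s y \<omega>) \<partial>M) \<and> (\<integral>\<omega>. h y (s y \<omega>) \<partial>M) \<le> 1 + (c y)^2 * G2"
    if y: "y \<in> U" for y
  proof -
    have tr: "(\<integral>\<omega>. h y (s y \<omega>) \<partial>M) = (\<integral>\<omega>. h y (s v0 \<omega>) \<partial>M)" by (rule transfer_integral) simp
    have hi0: "integrable M (\<lambda>\<omega>. h y (s v0 \<omega>))"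
      by (rule integrable_const_bound[where B="exp (\<bar>c y\<bar> * B)"]) (use hb in auto)
    have ub: "\<bar>c y * g u\<bar> \<le> 1/2" for u
    proof -
      have "\<bar>c y * g u\<bar> \<le> \<bar>c y\<bar> * B" using gb[of u] by (simp add: abs_mult mult_left_mono)
      then show ?thesis using cB[OF y] by simp
    qed
    have i1: "integrable M (\<lambda>\<omega>. 1 + c y * g (s v0 \<omega>) + (c y)^2 / 4 * (g (s v0 \<omega>))^2)"
      using gi g2i by simp
    have i2: "integrable M (\<lambda>\<omega>. 1 + c y * g (s v0 \<omega>) + (c y)^2 * (g (s v0 \<omega>))^2)"
      using gi g2i by simp
    have v1: "(\<integral>\<omega>. 1 + c y * g (s v0 \<omega>) + (c y)^2 / 4 * (g (s v0 \<omega>))^2 \<partial>M) = 1 + (c y)^2 * G2 / 4"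
      using gi g2i g0 by (simp add: G2_def prob_space)
    have v2: "(\<integral>\<omega>. 1 + c y * g (s v0 \<omega>) + (c y)^2 * (g (s v0 \<omega>))^2 \<partial>M) = 1 + (c y)^2 * G2"
      using gi g2i g0 by (simp add: G2_def prob_space)
    have "(\<integral>\<omega>. 1 + c y * g (s v0 \<omega>) + (c y)^2 / 4 * (g (s v0 \<omega>))^2 \<partial>M) \<le> (\<integral>\<omega>. h y (s v0 \<omega>) \<partial>M)"
    proof (rule integral_mono[OF i1 hi0])
      fix \<omega>
      show "1 + c y * g (s v0 \<omega>) + (c y)^2 / 4 * (g (s v0 \<omega>))^2 \<le> h y (s v0 \<omega>)"
        using exp_quad_bounds(1)[OF ub[of "s v0 \<omega>"]] by (simp add: h_def power_mult_distrib)
    qed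
    moreover have "(\<integral>\<omega>. h y (s v0 \<omega>) \<partial>M) \<le> (\<integral>\<omega>. 1 + c y * g (s v0 \<omega>) + (c y)^2 * (g (s v0 \<omega>))^2 \<partial>M)"
    proof (rule integral_mono[OF hi0 i2])
      fix \<omega>
      show "h y (s v0 \<omega>) \<le> 1 + c y * g (s v0 \<omega>) + (c y)^2 * (g (s v0 \<omega>))^2"
        using exp_quad_bounds(2)[OF ub[of "s v0 \<omega>"]] by (simp add: h_def power_mult_distrib)
    qed
    ultimately show ?thesis using v1 v2 tr by simp
  qed
  have "1 + (\<Sum>y\<in>U. (c y)^2) * G2 / 4 = 1 + (\<Sum>y\<in>U. (c y)^2 * G2 / 4)"
    by (simp add: sum_distrib_right sum_divide_distrib)
  also have "\<dots> \<le> (\<Prod>y\<in>U. 1 + (c y)^2 * G2 / 4)"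
    by (rule prod_ge_sum[OF U]) (use G2nn in auto)
  also have "\<dots> \<le> (\<Prod>y\<in>U. \<integral>\<omega>. h y (s y \<omega>) \<partial>M)"
    by (rule prod_mono) (use fac G2nn in auto)
  finally show "1 + (\<Sum>y\<in>U. (c y)^2) * (\<integral>\<omega>. (g (s v0 \<omega>))^2 \<partial>M) / 4 \<le> (\<integral>\<omega>. exp (\<Sum>y\<in>U. c y * g (s y \<omega>)) \<partial>M)"
    unfolding eq PI G2_def .
  have "(\<Prod>y\<in>U. \<integral>\<omega>. h y (s y \<omega>) \<partial>M) \<le> (\<Prod>y\<in>U. exp ((c y)^2 * G2))"
  proof (rule prod_mono)
    fix y assume y: "y \<in> U"
    have "0 \<le> 1 + (c y)^2 * G2 / 4" using G2nn by simp
    then show "0 \<le> (\<integral>\<omega>. h y (s y \<omega>) \<partial>M) \<and> (\<integral>\<omega>. h y (s y \<omega>) \<partial>M) \<le> exp ((c y)^2 * G2)"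
      using fac[OF y] exp_ge_add_one_self[of "(c y)^2 * G2"] by linarith
  qed
  also have "\<dots> = exp ((\<Sum>y\<in>U. (c y)^2) * G2)"
    by (simp add: exp_sum[OF U] sum_distrib_right)
  finally show "(\<integral>\<omega>. exp (\<Sum>y\<in>U. c y * g (s y \<omega>)) \<partial>M) \<le> exp ((\<Sum>y\<in>U. (c y)^2) * (\<integral>\<omega>. (g (s v0 \<omega>))^2 \<partial>M))"
    unfolding eq PI G2_def .
qed

lemma exp_tail:
  fixes T :: "'w \<Rightarrow> real"
  assumes Tm[measurable]: "T \<in> borel_measurable M" and l: "l > 0"
    and i1: "integrable M (\<lambda>\<omega>. exp (l * T \<omega>))" and i2: "integrable M (\<lambda>\<omega>. exp (2 * l * T \<omega>))"
    and D: "exp (l * r) \<le> (\<integral>\<omega>. exp (l * T \<omega>) \<partial>M)"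
  shows "((\<integral>\<omega>. exp (l * T \<omega>) \<partial>M) - exp (l * r))^2 \<le> (\<integral>\<omega>. exp (2 * l * T \<omega>) \<partial>M) * prob {\<omega>\<in>space M. T \<omega> > r}"
proof -
  define A where "A = {\<omega>\<in>space M. T \<omega> > r}"
  have A[measurable]: "A \<in> sets M" unfolding A_def by measurable
  define m where "m = (\<integral>\<omega>. exp (l * T \<omega>) \<partial>M)"
  define Q where "Q = (\<integral>\<omega>. exp (2 * l * T \<omega>) \<partial>M)"
  define P where "P = prob A"
  define Dd where "Dd = m - exp (l * r)"
  have Dd0: "Dd \<ge> 0" using D by (simp add: Dd_def m_def)
  have Q0: "Q \<ge> 0" unfolding Q_def by simp
  have P0: "P \<ge> 0" unfolding P_def by simp
  have xi: "integrable M (\<lambda>\<omega>. indicator A \<omega> * exp (l * T \<omega>))"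
    using integrable_mult_indicator[OF A i1] by simp
  have ii: "integrable M (indicator A :: 'w \<Rightarrow> real)"
    using A by (simp add: integrable_indicator_iff emeasure_eq_measure)
  have IA: "(\<integral>\<omega>. indicator A \<omega> \<partial>M) = P" unfolding P_def using A by (simp add: emeasure_eq_measure)
  have step1: "m \<le> exp (l * r) + (\<integral>\<omega>. indicator A \<omega> * exp (l * T \<omega>) \<partial>M)"
  proof -
    have "m \<le> (\<integral>\<omega>. exp (l * r) + indicator A \<omega> * exp (l * T \<omega>) \<partial>M)"
      unfolding m_def
    proof (rule integral_mono[OF i1])
      show "integrable M (\<lambda>\<omega>. exp (l * r) + indicator A \<omega> * exp (l * T \<omega>))" using xi by (simp add: prob_space)
      fix \<omega> assume \<omega>: "\<omega> \<in> space M"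
      show "exp (l * T \<omega>) \<le> exp (l * r) + indicator A \<omega> * exp (l * T \<omega>)"
      proof (cases "T \<omega> > r")
        case True then show ?thesis using \<omega> by (simp add: A_def)
      next
        case False then have "l * T \<omega> \<le> l * r" using l by (simp add: mult_left_mono)
        then show ?thesis using \<omega> by (simp add: A_def indicator_def)
      qed
    qed
    also have "\<dots> = exp (l * r) + (\<integral>\<omega>. indicator A \<omega> * exp (l * T \<omega>) \<partial>M)"
      using xi by (simp add: prob_space)
    finally show ?thesis .
  qed
  have step2: "2 * b * (\<integral>\<omega>. indicator A \<omega> * exp (l * T \<omega>) \<partial>M) \<le> Q + b^2 * P" if b: "b > 0" for b
  proof -
    have "(\<integral>\<omega>. 2 * b * (indicator A \<omega> * exp (l * T \<omega>)) \<partial>M) \<le> (\<integral>\<omega>. exp (2 * l * T \<omega>) + b^2 * indicator A \<omega> \<partial>M)"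
    proof (rule integral_mono)
      show "integrable M (\<lambda>\<omega>. 2 * b * (indicator A \<omega> * exp (l * T \<omega>)))" by (rule integrable_mult_right[OF xi])
      show "integrable M (\<lambda>\<omega>. exp (2 * l * T \<omega>) + b^2 * indicator A \<omega>)"
        by (rule Bochner_Integration.integrable_add[OF i2 integrable_mult_right[OF ii]])
      fix \<omega>
      have e2: "exp (2 * l * T \<omega>) = (exp (l * T \<omega>))^2"
      proof -
        have "2 * l * T \<omega> = l * T \<omega> + l * T \<omega>" by simp
        then show ?thesis by (simp only: exp_add power2_eq_square)
      qed
      have h0: "0 \<le> (exp (l * T \<omega>) - b * indicator A \<omega>)^2" by simp
      have h1: "(indicator A \<omega> :: real)^2 = indicator A \<omega>" by (simp add: indicator_def)
      have h2: "(exp (l * T \<omega>) - b * indicator A \<omega>)^2 = (exp (l * T \<omega>))^2 - 2 * b * (indicator A \<omega> * exp (l * T \<omega>)) + b^2 * (indicator A \<omega>)^2"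
        by (simp add: power2_eq_square algebra_simps)
      show "2 * b * (indicator A \<omega> * exp (l * T \<omega>)) \<le> exp (2 * l * T \<omega>) + b^2 * indicator A \<omega>"
        using h0 h2[unfolded h1] e2 by linarith
    qed
    moreover have "(\<integral>\<omega>. 2 * b * (indicator A \<omega> * exp (l * T \<omega>)) \<partial>M) = 2 * b * (\<integral>\<omega>. indicator A \<omega> * exp (l * T \<omega>) \<partial>M)"
      by (rule Bochner_Integration.integral_mult_right_zero)
    moreover have "(\<integral>\<omega>. exp (2 * l * T \<omega>) + b^2 * indicator A \<omega> \<partial>M) = Q + b^2 * P"
    proof -
      have "(\<integral>\<omega>. exp (2 * l * T \<omega>) + b^2 * indicator A \<omega> \<partial>M) = Q + (\<integral>\<omega>. b^2 * indicator A \<omega> \<partial>M)"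
        unfolding Q_def by (rule Bochner_Integration.integral_add[OF i2]) (rule integrable_mult_right[OF ii])
      also have "(\<integral>\<omega>. b^2 * indicator A \<omega> \<partial>M) = b^2 * P"
        unfolding IA[symmetric] by (rule Bochner_Integration.integral_mult_right_zero)
      finally show ?thesis .
    qed
    ultimately show ?thesis by simp
  qed
  have "Dd^2 \<le> Q * P"
  proof (cases "Dd = 0")
    case True then show ?thesis using Q0 P0 by simp
  next
    case False
    then have Dp: "Dd > 0" using Dd0 by simp
    have k: "2 * b * Dd \<le> Q + b^2 * P" if "b > 0" for b
    proof -
      have "Dd \<le> (\<integral>\<omega>. indicator A \<omega> * exp (l * T \<omega>) \<partial>M)" using step1 unfolding Dd_def by simp
      then have "2 * b * Dd \<le> 2 * b * (\<integral>\<omega>. indicator A \<omega> * exp (l * T \<omega>) \<partial>M)"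
        using that by (intro mult_left_mono) auto
      then show ?thesis using step2[OF that] by linarith
    qed
    show ?thesis
    proof (cases "P = 0")
      case True
      have "2 * ((Q + 1) / Dd) * Dd \<le> Q" using k[of "(Q + 1) / Dd"] Dp Q0 True by simp
      then show ?thesis using Dp Q0 by simp
    next
      case False
      then have Pp: "P > 0" using P0 by simp
      have "2 * (Dd / P) * Dd \<le> Q + (Dd / P)^2 * P" using k[of "Dd / P"] Dp Pp by simp
      then have "2 * Dd^2 / P \<le> Q + Dd^2 / P" using Pp by (simp add: power2_eq_square field_simps)
      then have "Dd^2 / P \<le> Q" by simp
      then show ?thesis using Pp by (simp add: field_simps)
    qed
  qed
  then show ?thesis unfolding Dd_def m_def Q_def P_def A_def .
qed

end

context pset begin

lemma mT_bound: "\<bar>mT L\<bar> \<le> L" if "L \<ge> 0"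
proof -
  have "0 \<le> rho2 L" unfolding rho2_def by simp
  then have "(mT L)^2 \<le> (\<integral>\<omega>. (trc L (s v0 \<omega>))^2 \<partial>M)" using rho2_eq[of L] by simp
  also have "\<dots> \<le> (\<integral>\<omega>. L^2 \<partial>M)"
    by (rule integral_mono[OF int_trc2]) (auto simp: trc_sq)
  also have "\<dots> = L^2" by (simp add: prob_space)
  finally have "(mT L)^2 \<le> L^2" .
  then show ?thesis using that abs_le_square_iff[of "mT L" L] by simp
qed

lemma main_est:
  fixes cb :: real
  assumes cbp: "cb > 0"
  shows "\<exists>c>0. \<exists>t>0. \<exists>L>0. \<forall>U a. finite U \<longrightarrow> (\<forall>y\<in>U. 0 \<le> a y \<and> a y \<le> cb) \<longrightarrow>
     (8 * cb * L)^2 \<le> (\<Sum>y\<in>U. (a y)^2) \<longrightarrow>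
     c \<le> prob {\<omega>\<in>space M. t * sqrt (\<Sum>y\<in>U. (a y)^2) < (\<Sum>y\<in>U. a y * (s y \<omega> - 1))}"
proof -
  define \<sigma> where "\<sigma> = sig2"
  have \<sigma>p: "\<sigma> > 0" using sig2_pos by (simp add: \<sigma>_def)
  define c1 where "c1 = \<sigma>^2 * exp (- 4 * \<sigma>) / 256"
  have c1p: "c1 > 0" using \<sigma>p by (simp add: c1_def)
  define t where "t = ln (1 + \<sigma> / 16) / 2"
  have tp: "t > 0" using \<sigma>p by (simp add: t_def)
  have e2t: "exp (2 * t) = 1 + \<sigma> / 16" using \<sigma>p by (simp add: t_def)
  have "min (\<sigma> / 4) (c1 * t^2 / 2) > 0" using \<sigma>p c1p tp by simp
  then obtain L where L1: "L \<ge> 1" and tauL: "tau L \<le> min (\<sigma> / 4) (c1 * t^2 / 2)"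
    using tau_small by blast
  have tau1: "tau L \<le> \<sigma> / 4" and tau2: "tau L \<le> c1 * t^2 / 2" using tauL by auto
  have rho_lo: "rho2 L \<ge> \<sigma> / 2" using rho2_bounds(1)[of L] tau1 by (simp add: \<sigma>_def)
  have rho_hi: "rho2 L \<le> \<sigma>" using rho2_bounds(2)[of L] by (simp add: \<sigma>_def)
  define Yg where "Yg u = trc L u - mT L" for u
  define Zg where "Zg u = wvc L u - mW L" for u
  have Ygm[measurable]: "Yg \<in> borel_measurable borel" unfolding Yg_def by measurable
  have Zgm[measurable]: "Zg \<in> borel_measurable borel" unfolding Zg_def by measurable
  have YZ: "Yg u + Zg u = u - 1" for u
    using trc_wvc[of L u] mT_mW[of L] by (simp add: Yg_def Zg_def)
  have Ygb: "\<bar>Yg u\<bar> \<le> 2 * L" for u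
    using trc_bd[of L u] mT_bound[of L] L1 by (simp add: Yg_def abs_le_iff)
  have Yg0: "(\<integral>\<omega>. Yg (s v0 \<omega>) \<partial>M) = 0"
    unfolding Yg_def using int_trc[of L] by (simp add: mT_def prob_space)
  have YgV: "(\<integral>\<omega>. (Yg (s v0 \<omega>))^2 \<partial>M) = rho2 L"
    unfolding Yg_def rho2_def ..
  have Zg2: "integrable M (\<lambda>\<omega>. (Zg (s v0 \<omega>))^2)"
    unfolding Zg_def power2_diff using int_wvc[of L] int_wvc2[of L] by simp
  have Zg0: "(\<integral>\<omega>. Zg (s v0 \<omega>) \<partial>M) = 0"
    unfolding Zg_def using int_wvc[of L] by (simp add: mW_def prob_space)
  have ZgV: "(\<integral>\<omega>. (Zg (s v0 \<omega>))^2 \<partial>M) \<le> tau L"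
    unfolding Zg_def by (rule zvar)
  have main: "\<forall>U a. finite U \<longrightarrow> (\<forall>y\<in>U. 0 \<le> a y \<and> a y \<le> cb) \<longrightarrow>
     (8 * cb * L)^2 \<le> (\<Sum>y\<in>U. (a y)^2) \<longrightarrow>
     c1 / 2 \<le> prob {\<omega>\<in>space M. t * sqrt (\<Sum>y\<in>U. (a y)^2) < (\<Sum>y\<in>U. a y * (s y \<omega> - 1))}"
  proof (intro allI impI)
    fix U :: "'v set" and a :: "'v \<Rightarrow> real"
    assume U: "finite U" and ab: "\<forall>y\<in>U. 0 \<le> a y \<and> a y \<le> cb"
      and VL: "(8 * cb * L)^2 \<le> (\<Sum>y\<in>U. (a y)^2)"
    define V where "V = (\<Sum>y\<in>U. (a y)^2)"
    define sV where "sV = sqrt V"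
    have Vp: "V > 0" using VL cbp L1 unfolding V_def
      by (smt (verit) mult_pos_pos zero_less_power)
    have sVp: "sV > 0" using Vp by (simp add: sV_def)
    have sV2: "sV^2 = V" using Vp by (simp add: sV_def)
    have sVL: "8 * cb * L \<le> sV"
      unfolding sV_def using VL cbp L1 unfolding V_def
      by (metis less_eq_real_def mult_nonneg_nonneg real_le_rsqrt zero_le_numeral order_trans zero_le_one)
    define c where "c y = a y / sV" for y
    have csum: "(\<Sum>y\<in>U. (c y)^2) = 1"
      using sV2 Vp by (simp add: c_def power_divide sum_divide_distrib[symmetric] V_def)
    have c2sum: "(\<Sum>y\<in>U. (2 * c y)^2) = 4"
      using csum by (simp add: power_mult_distrib sum_distrib_left[symmetric])
    have cbd: "\<bar>2 * c y\<bar> * (2 * L) \<le> 1/2" if y: "y \<in> U" for y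
    proof -
      have "\<bar>2 * c y\<bar> * (2 * L) = 4 * L * a y / sV" using ab y sVp by (simp add: c_def abs_mult)
      also have "\<dots> \<le> 4 * L * cb / sV" using ab y sVp L1 by (intro divide_right_mono mult_left_mono) auto
      also have "\<dots> \<le> 4 * L * cb / (8 * cb * L)"
        using sVL cbp L1 sVp by (intro divide_left_mono) auto
      also have "\<dots> = 1/2" using cbp L1 by simp
      finally show ?thesis .
    qed
    have cbd1: "\<bar>c y\<bar> * (2 * L) \<le> 1/2" if y: "y \<in> U" for y
      using cbd[OF y] L1 by (simp add: abs_mult)
    define TY where "TY \<omega> = (\<Sum>y\<in>U. a y * Yg (s y \<omega>))" for \<omega>
    define TZ where "TZ \<omega> = (\<Sum>y\<in>U. a y * Zg (s y \<omega>))" for \<omega>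
    define S where "S \<omega> = (\<Sum>y\<in>U. a y * (s y \<omega> - 1))" for \<omega>
    have TYm[measurable]: "TY \<in> borel_measurable M" unfolding TY_def by measurable
    have TZm[measurable]: "TZ \<in> borel_measurable M" unfolding TZ_def by measurable
    have Sm[measurable]: "S \<in> borel_measurable M" unfolding S_def by measurable
    have STYZ: "S \<omega> = TY \<omega> + TZ \<omega>" for \<omega>
      unfolding S_def TY_def TZ_def by (simp add: YZ[symmetric] distrib_left sum.distrib)
    define l where "l = 1 / sV"
    have lp: "l > 0" using sVp by (simp add: l_def)
    have lTY: "l * TY \<omega> = (\<Sum>y\<in>U. c y * Yg (s y \<omega>))" for \<omega>
      by (simp add: l_def TY_def c_def sum_distrib_left)
    have lTY2: "2 * l * TY \<omega> = (\<Sum>y\<in>U. (2 * c y) * Yg (s y \<omega>))" for \<omega>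
      by (simp add: l_def TY_def c_def sum_distrib_left mult.assoc)
    note mg1 = mgf_bounds[where c=c, OF Ygm Ygb Yg0 U cbd1]
    note mg2 = mgf_bounds[where c="\<lambda>y. 2 * c y", OF Ygm Ygb Yg0 U cbd]
    have i1: "integrable M (\<lambda>\<omega>. exp (l * TY \<omega>))" unfolding lTY by (rule mg1(1))
    have i2: "integrable M (\<lambda>\<omega>. exp (2 * l * TY \<omega>))" unfolding lTY2 by (rule mg2(1))
    have m_lo: "1 + rho2 L / 4 \<le> (\<integral>\<omega>. exp (l * TY \<omega>) \<partial>M)"
      unfolding lTY using mg1(2) csum YgV by simp
    have Q_hi: "(\<integral>\<omega>. exp (2 * l * TY \<omega>) \<partial>M) \<le> exp (4 * \<sigma>)"
    proof -
      have "(\<integral>\<omega>. exp (2 * l * TY \<omega>) \<partial>M) \<le> exp (4 * rho2 L)"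
        unfolding lTY2 using mg2(3) c2sum YgV by simp
      also have "\<dots> \<le> exp (4 * \<sigma>)" using rho_hi by simp
      finally show ?thesis .
    qed
    have lr: "l * (2 * t * sV) = 2 * t" using sVp by (simp add: l_def)
    have Dlo: "\<sigma> / 16 \<le> (\<integral>\<omega>. exp (l * TY \<omega>) \<partial>M) - exp (l * (2 * t * sV))"
      unfolding lr e2t using m_lo rho_lo by linarith
    have "(\<sigma> / 16)^2 \<le> ((\<integral>\<omega>. exp (l * TY \<omega>) \<partial>M) - exp (l * (2 * t * sV)))^2"
      using Dlo \<sigma>p by (intro power_mono) auto
    also have "\<dots> \<le> (\<integral>\<omega>. exp (2 * l * TY \<omega>) \<partial>M) * prob {\<omega>\<in>space M. TY \<omega> > 2 * t * sV}"
      by (rule exp_tail[OF TYm lp i1 i2]) (use Dlo \<sigma>p in linarith)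
    also have "\<dots> \<le> exp (4 * \<sigma>) * prob {\<omega>\<in>space M. TY \<omega> > 2 * t * sV}"
      by (rule mult_right_mono[OF Q_hi]) simp
    finally have PY: "c1 \<le> prob {\<omega>\<in>space M. TY \<omega> > 2 * t * sV}"
      unfolding c1_def by (simp add: field_simps power2_eq_square exp_minus)
    have TZ2: "integrable M (\<lambda>\<omega>. (TZ \<omega>)^2)" and TZ2v: "(\<integral>\<omega>. (TZ \<omega>)^2 \<partial>M) = V * (\<integral>\<omega>. (Zg (s v0 \<omega>))^2 \<partial>M)"
      using var_sum[OF Zgm Zg2 Zg0 U, of a] by (simp_all add: TZ_def V_def)
    have Zgi: "integrable M (\<lambda>\<omega>. Zg (s y \<omega>))" for y
    proof -
      have "integrable M (\<lambda>\<omega>. Zg (s v0 \<omega>))" by (rule square_integrable_imp_integrable[OF _ Zg2]) simp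
      then show ?thesis using transfer_int[OF Zgm, of y] by simp
    qed
    have ETZ: "(\<integral>\<omega>. TZ \<omega> \<partial>M) = 0"
    proof -
      have "(\<integral>\<omega>. TZ \<omega> \<partial>M) = (\<Sum>y\<in>U. a y * (\<integral>\<omega>. Zg (s y \<omega>) \<partial>M))"
        unfolding TZ_def using Zgi by (simp add: Bochner_Integration.integral_sum)
      also have "\<dots> = 0" using transfer_integral[OF Zgm] Zg0 by simp
      finally show ?thesis .
    qed
    have tsV: "t * sV > 0" using tp sVp by simp
    have PZ: "prob {\<omega>\<in>space M. \<bar>TZ \<omega> - expectation TZ\<bar> \<ge> t * sV} \<le> variance TZ / (t * sV)^2"
      by (rule Chebyshev_inequality[OF TZm TZ2 tsV])
    have "variance TZ = (\<integral>\<omega>. (TZ \<omega>)^2 \<partial>M)" using ETZ by simp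
    also have "\<dots> \<le> V * tau L" unfolding TZ2v using ZgV Vp by (simp add: mult_left_mono)
    finally have "variance TZ / (t * sV)^2 \<le> V * tau L / (t * sV)^2"
      using tsV by (simp add: divide_right_mono)
    also have "\<dots> = tau L / t^2" using sV2 Vp tp by (simp add: power_mult_distrib)
    also have "\<dots> \<le> c1 / 2" using tau2 tp by (simp add: field_simps)
    finally have vb: "variance TZ / (t * sV)^2 \<le> c1 / 2" .
    have PZ': "prob {\<omega>\<in>space M. \<bar>TZ \<omega>\<bar> \<ge> t * sV} \<le> variance TZ / (t * sV)^2"
      using PZ ETZ by (simp del: power_mult_distrib)
    have PZ2: "prob {\<omega>\<in>space M. \<bar>TZ \<omega>\<bar> \<ge> t * sV} \<le> c1 / 2" using PZ' vb by linarith
    have sub: "{\<omega>\<in>space M. TY \<omega> > 2 * t * sV} \<subseteq> {\<omega>\<in>space M. t * sV < S \<omega>} \<union> {\<omega>\<in>space M. \<bar>TZ \<omega>\<bar> \<ge> t * sV}"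
      using STYZ by force
    have "c1 \<le> prob ({\<omega>\<in>space M. t * sV < S \<omega>} \<union> {\<omega>\<in>space M. \<bar>TZ \<omega>\<bar> \<ge> t * sV})"
      using PY finite_measure_mono[OF sub] by simp
    also have "\<dots> \<le> prob {\<omega>\<in>space M. t * sV < S \<omega>} + prob {\<omega>\<in>space M. \<bar>TZ \<omega>\<bar> \<ge> t * sV}"
      by (rule measure_Un_le) simp_all
    finally show "c1 / 2 \<le> prob {\<omega>\<in>space M. t * sqrt (\<Sum>y\<in>U. (a y)^2) < (\<Sum>y\<in>U. a y * (s y \<omega> - 1))}"
      using PZ2 unfolding S_def sV_def V_def by simp
  qed
  have "c1 / 2 > 0" "L > 0" using c1p L1 by auto
  then show ?thesis using tp main by blast
qed

end

lemma (in prob_space) indep_sets_reindex_inj: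
  assumes ind: "indep_sets F UNIV" and inj: "inj e"
  shows "indep_sets (\<lambda>i. F (e i)) UNIV"
  unfolding indep_sets_def
proof (intro conjI ballI allI impI)
  fix i show "F (e i) \<subseteq> events" using ind by (auto simp: indep_sets_def)
next
  fix J A assume J: "J \<subseteq> UNIV" "J \<noteq> {}" "finite J" and A: "A \<in> Pi J (\<lambda>i. F (e i))"
  define A' where "A' y = A (inv e y)" for y
  have A'J: "A' \<in> Pi (e ` J) F" using A inj by (auto simp: A'_def)
  have "prob (\<Inter>j\<in>e ` J. A' j) = (\<Prod>j\<in>e ` J. prob (A' j))"
    using ind J A'J unfolding indep_sets_def by (metis finite_imageI image_is_empty subset_UNIV)
  moreover have "(\<Inter>j\<in>e ` J. A' j) = (\<Inter>j\<in>J. A j)" using inj by (auto simp: A'_def)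
  moreover have "(\<Prod>j\<in>e ` J. prob (A' j)) = (\<Prod>j\<in>J. prob (A j))"
    using inj by (subst prod.reindex) (auto simp: A'_def inj_on_def)
  ultimately show "prob (\<Inter>j\<in>J. A j) = (\<Prod>j\<in>J. prob (A j))" by simp
qed

locale full = rwg E v0 + pset M s v0
  for E :: "'v \<Rightarrow> 'v \<Rightarrow> bool" and v0 :: 'v and M :: "'w measure" and s :: "'v \<Rightarrow> 'w \<Rightarrow> real" +
  assumes tr: "\<forall>y. summable (\<lambda>j. srw_prob E j v0 y)"
    and ns: "\<not> ((\<lambda>y. (green E v0 y)\<^sup>2) summable_on UNIV)"
begin

definition Sn :: "nat \<Rightarrow> 'w \<Rightarrow> real" where "Sn n \<omega> = (\<Sum>y\<in>UB n. wt n y * (s y \<omega> - 1))"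
definition AK :: "nat \<Rightarrow> 'w set" where "AK K = {\<omega>\<in>space M. \<forall>n. Sn n \<omega> \<le> real K}"
definition AA :: "'w set" where "AA = {\<omega>\<in>space M. \<exists>K::nat. \<forall>n. Sn n \<omega> \<le> real K}"

lemma Sn_meas[measurable]: "Sn n \<in> borel_measurable M" unfolding Sn_def by measurable
lemma AK_meas[measurable]: "AK K \<in> sets M" unfolding AK_def by measurable
lemma AA_meas[measurable]: "AA \<in> sets M" unfolding AA_def by measurable

lemma cb_pos: "cb > 0"
  using green_nonneg[of v0] tr by (simp add: cb_def)

lemma wtb: "wt n y \<le> cb" using wt_bound tr by blast

lemma stab_AA:
  assumes "stabilizes E (\<lambda>x. s x \<omega>)" and "\<omega> \<in> space M"
  shows "\<omega> \<in> AA"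
proof -
  obtain f where f0: "\<forall>x. f x \<ge> 0" and st: "\<forall>x. s x \<omega> + laplacian E f x \<le> 1"
    using assms(1) by (auto simp: stabilizes_def)
  have "Sn n \<omega> \<le> real d * f v0" for n
    unfolding Sn_def using det_ineq[of f "\<lambda>x. s x \<omega>" n] f0 st by auto
  then have "\<forall>n. Sn n \<omega> \<le> real (nat \<lceil>real d * f v0\<rceil>)"
    by (meson order_trans real_nat_ceiling_ge)
  then show ?thesis using assms(2) by (auto simp: AA_def)
qed

lemma AK_bound: "\<exists>c>0. \<forall>K. prob (AK K) \<le> 1 - c"
proof -
  obtain c t L where cp: "c > 0" and tp: "t > 0" and Lp: "L > 0" and
    est: "\<forall>U a. finite U \<longrightarrow> (\<forall>y\<in>U. 0 \<le> a y \<and> a y \<le> cb) \<longrightarrow>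
     (8 * cb * L)^2 \<le> (\<Sum>y\<in>U. (a y)^2) \<longrightarrow>
     c \<le> prob {\<omega>\<in>space M. t * sqrt (\<Sum>y\<in>U. (a y)^2) < (\<Sum>y\<in>U. a y * (s y \<omega> - 1))}"
    using main_est[OF cb_pos] by blast
  have "prob (AK K) \<le> 1 - c" for K
  proof -
    obtain n where n: "VV n > (8 * cb * L)^2 + (real K / t)^2"
      using VV_unbounded[OF tr ns] by blast
    have V1: "(8 * cb * L)^2 \<le> VV n" using n by (smt (verit) zero_le_power2)
    have V2: "(real K / t)^2 \<le> VV n" using n by (smt (verit) zero_le_power2)
    have "real K / t \<le> sqrt (VV n)" using V2 real_le_rsqrt by simp
    then have Kle: "real K \<le> t * sqrt (VV n)" using tp by (simp add: field_simps)
    define B where "B = {\<omega>\<in>space M. t * sqrt (VV n) < Sn n \<omega>}"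
    have Bm: "B \<in> sets M" unfolding B_def by measurable
    have cB: "c \<le> prob B"
      using est[rule_format, of "UB n" "wt n"] UB_finite wt_nonneg wtb V1
      unfolding B_def VV_def Sn_def by auto
    have "AK K \<subseteq> space M - B"
    proof
      fix x assume x: "x \<in> AK K"
      then have "Sn n x \<le> real K" "x \<in> space M" by (auto simp: AK_def)
      then show "x \<in> space M - B" using Kle by (auto simp: B_def)
    qed
    then have "prob (AK K) \<le> prob (space M - B)" using Bm by (intro finite_measure_mono) auto
    also have "\<dots> = 1 - prob B" using prob_compl[OF Bm] .
    finally show ?thesis using cB by simp
  qed
  then show ?thesis using cp by blast
qed

lemma AA_lt1: "prob AA < 1"
proof -
  obtain c where cp: "c > 0" and b: "\<And>K. prob (AK K) \<le> 1 - c" using AK_bound by blast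
  have AAU: "AA = (\<Union>K. AK K)" by (auto simp: AA_def AK_def)
  have inc: "incseq AK"
    by (rule incseq_SucI) (auto simp: AK_def intro: order_trans)
  have "(\<lambda>K. prob (AK K)) \<longlonglongrightarrow> prob (\<Union>K. AK K)"
    by (rule finite_Lim_measure_incseq) (use inc in auto)
  then have "prob (\<Union>K. AK K) \<le> 1 - c" by (rule LIMSEQ_le_const2) (use b in auto)
  then show ?thesis using cp AAU by simp
qed

end

context full begin

lemma reach: "(x, y) \<in> {(u, v). E u v}\<^sup>* \<Longrightarrow> \<exists>j. y \<in> rball E x j"
proof (induction rule: converse_rtrancl_induct)
  case base
  have "y \<in> rball E y 0" by simp
  then show ?case by blast
next
  case (step x z)
  then obtain j where "y \<in> rball E z j" by blast
  moreover have "E x z" using step by simp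
  ultimately have "y \<in> rball E x (Suc j)" by auto
  then show ?case by blast
qed

lemma countV: "countable (UNIV :: 'v set)"
proof -
  have "\<forall>y. \<exists>j. y \<in> rball E v0 j" using reach conn unfolding connected_graph_def by blast
  then have "UNIV = (\<Union>j. rball E v0 j)" by blast
  moreover have "countable (\<Union>j. rball E v0 j)"
    by (rule countable_UN) (auto intro: countable_finite ball_finite[OF lf])
  ultimately show ?thesis by simp
qed

definition ee :: "nat \<Rightarrow> 'v" where "ee = from_nat_into UNIV"

lemma ee_bij: "bij ee"
  unfolding ee_def using bij_betw_from_nat_into[OF countV inf] by simp

definition Asig :: "nat \<Rightarrow> 'w set set" where
  "Asig i = sigma_sets (space M) {s (ee i) -` B \<inter> space M | B. B \<in> sets borel}"

lemma Asig_pow: "Asig i \<subseteq> Pow (space M)"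
  unfolding Asig_def by (auto dest: sigma_sets_into_sp[rotated])

lemma Asig_sa: "sigma_algebra (space M) (Asig i)"
  unfolding Asig_def by (rule sigma_algebra_sigma_sets) auto

lemma Asig_indep: "indep_sets Asig UNIV"
proof -
  have "indep_sets (\<lambda>y. sigma_sets (space M) {s y -` B \<inter> space M | B. B \<in> sets borel}) UNIV"
    using ind unfolding indep_vars_def by simp
  from indep_sets_reindex_inj[OF this, of ee] ee_bij show ?thesis
    unfolding Asig_def by (simp add: bij_is_inj)
qed

lemma AA_tail: "AA \<in> tail_events Asig"
  unfolding tail_events_def
proof (rule InterI, clarsimp)
  fix N
  define G where "G = (\<Union>i\<in>{N..}. Asig i)"
  have Gp: "G \<subseteq> Pow (space M)" using Asig_pow by (auto simp: G_def)
  define MN where "MN = sigma (space M) G"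
  have spMN: "space MN = space M" using Gp by (simp add: MN_def space_measure_of)
  have setsMN: "sets MN = sigma_sets (space M) G" using Gp by (simp add: MN_def sets_measure_of)
  define F where "F = ee ` {..<N}"
  have finF: "finite F" by (simp add: F_def)
  have smeas: "s y \<in> borel_measurable MN" if y: "y \<notin> F" for y
  proof -
    obtain i where yi: "y = ee i" using ee_bij by (metis bij_pointE)
    then have iN: "i \<ge> N" using y by (auto simp: F_def)
    show ?thesis
    proof (rule measurableI)
      fix B :: "real set" assume B: "B \<in> sets borel"
      have "s y -` B \<inter> space M \<in> Asig i"
        unfolding Asig_def yi by (rule sigma_sets.Basic) (use B in auto)
      then have "s y -` B \<inter> space M \<in> G" using iN by (auto simp: G_def)
      then show "s y -` B \<inter> space MN \<in> sets MN"
        unfolding spMN setsMN by (rule sigma_sets.Basic)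
    qed simp
  qed
  define S' where "S' n \<omega> = (\<Sum>y\<in>UB n - F. wt n y * (s y \<omega> - 1))" for n \<omega>
  have S'm[measurable]: "S' n \<in> borel_measurable MN" for n
    unfolding S'_def
  proof (rule borel_measurable_sum)
    fix y assume "y \<in> UB n - F"
    then have [measurable]: "s y \<in> borel_measurable MN" using smeas by auto
    show "(\<lambda>\<omega>. wt n y * (s y \<omega> - 1)) \<in> borel_measurable MN" by measurable
  qed
  have AA'm: "{\<omega>\<in>space MN. \<exists>K::nat. \<forall>n. S' n \<omega> \<le> real K} \<in> sets MN" by measurable
  define C where "C \<omega> = (\<Sum>y\<in>F. cb * \<bar>s y \<omega> - 1\<bar>)" for \<omega>
  have diff: "\<bar>Sn n \<omega> - S' n \<omega>\<bar> \<le> C \<omega>" for n \<omega>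
  proof -
    have "Sn n \<omega> = (\<Sum>y\<in>UB n \<inter> F. wt n y * (s y \<omega> - 1)) + S' n \<omega>"
      unfolding Sn_def S'_def by (rule sum.Int_Diff[OF UB_finite])
    then have "\<bar>Sn n \<omega> - S' n \<omega>\<bar> = \<bar>\<Sum>y\<in>UB n \<inter> F. wt n y * (s y \<omega> - 1)\<bar>" by simp
    also have "\<dots> \<le> (\<Sum>y\<in>UB n \<inter> F. \<bar>wt n y * (s y \<omega> - 1)\<bar>)" by (rule sum_abs)
    also have "\<dots> \<le> (\<Sum>y\<in>UB n \<inter> F. cb * \<bar>s y \<omega> - 1\<bar>)"
      by (rule sum_mono) (simp add: abs_mult wt_nonneg wtb mult_right_mono)
    also have "\<dots> \<le> C \<omega>" unfolding C_def
      by (rule sum_mono2[OF finF]) (use cb_pos in auto)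
    finally show ?thesis .
  qed
  have eq: "AA = {\<omega>\<in>space MN. \<exists>K::nat. \<forall>n. S' n \<omega> \<le> real K}"
  proof (intro set_eqI iffI)
    fix \<omega> assume "\<omega> \<in> AA"
    then obtain K :: nat where sp: "\<omega> \<in> space M" and K: "\<forall>n. Sn n \<omega> \<le> real K" by (auto simp: AA_def)
    have "\<forall>n. S' n \<omega> \<le> real (nat \<lceil>real K + C \<omega>\<rceil>)"
    proof
      fix n have "S' n \<omega> \<le> real K + C \<omega>" using K[rule_format, of n] diff[of n \<omega>] by (auto simp: abs_le_iff)
      then show "S' n \<omega> \<le> real (nat \<lceil>real K + C \<omega>\<rceil>)" by (meson order_trans real_nat_ceiling_ge)
    qed
    then show "\<omega> \<in> {\<omega>\<in>space MN. \<exists>K::nat. \<forall>n. S' n \<omega> \<le> real K}" using sp spMN by blast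
  next
    fix \<omega> assume "\<omega> \<in> {\<omega>\<in>space MN. \<exists>K::nat. \<forall>n. S' n \<omega> \<le> real K}"
    then obtain K :: nat where sp: "\<omega> \<in> space M" and K: "\<forall>n. S' n \<omega> \<le> real K" using spMN by auto
    have "\<forall>n. Sn n \<omega> \<le> real (nat \<lceil>real K + C \<omega>\<rceil>)"
    proof
      fix n have "Sn n \<omega> \<le> real K + C \<omega>" using K[rule_format, of n] diff[of n \<omega>] by (auto simp: abs_le_iff)
      then show "Sn n \<omega> \<le> real (nat \<lceil>real K + C \<omega>\<rceil>)" by (meson order_trans real_nat_ceiling_ge)
    qed
    then show "\<omega> \<in> AA" using sp by (auto simp: AA_def)
  qed
  show "AA \<in> sigma_sets (space M) (\<Union> (Asig ` {N..}))"
    using AA'm unfolding eq[symmetric] setsMN G_def .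
qed

lemma AA_null: "prob AA = 0"
proof -
  have "prob AA = 0 \<or> prob AA = 1"
    by (rule kolmogorov_0_1_law[OF Asig_sa Asig_indep AA_tail])
  then show ?thesis using AA_lt1 by auto
qed

lemma final: "AE \<omega> in M. \<not> stabilizes E (\<lambda>x. s x \<omega>)"
proof (rule AE_I'[of AA])
  show "AA \<in> null_sets M" using AA_null AA_meas by (simp add: null_sets_def emeasure_eq_measure)
  show "{\<omega> \<in> space M. \<not> \<not> stabilizes E (\<lambda>x. s x \<omega>)} \<subseteq> AA" using stab_AA by auto
qed

end

theorem lemma5p3:
  fixes E :: "'v \<Rightarrow> 'v \<Rightarrow> bool" and v0 :: 'v
    and M :: "'w measure" and s :: "'v \<Rightarrow> 'w \<Rightarrow> real"
  assumes "simple_graph E" and "infinite (UNIV :: 'v set)" and "connected_graph E"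
    and "locally_finite E" and "vertex_transitive E"
    and transient: "\<forall>y. summable (\<lambda>j. srw_prob E j v0 y)"
    and "\<not> ((\<lambda>y. (green E v0 y)\<^sup>2) summable_on UNIV)"
    and "prob_space M"
    and "\<forall>x. s x \<in> borel_measurable M"
    and "prob_space.indep_vars M (\<lambda>_. borel) s UNIV"
    and "\<forall>x. distr M borel (s x) = distr M borel (s v0)"
    and "integrable M (s v0)"
    and "prob_space.expectation M (s v0) = 1"
    and "integrable M (\<lambda>\<omega>. (s v0 \<omega>)\<^sup>2)"
    and "prob_space.variance M (s v0) > 0"
  shows "AE \<omega> in M. \<not> stabilizes E (\<lambda>x. s x \<omega>)"
proof -
  note a = assms
  have r: "rwg E" unfolding rwg_def using a(1-5) by blast
  have p: "pset M s v0"
    unfolding pset_def pset_axioms_def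
  proof (intro conjI allI)
    show "prob_space M" by (rule a(8))
    fix x
    show "s x \<in> borel_measurable M" using a(9) by blast
    show "distr M borel (s x) = distr M borel (s v0)" using a(11) by blast
  qed (use a(10) a(12) a(13) a(14) a(15) in blast)+
  interpret full E v0 M s
    by (rule full.intro[OF r p]) (unfold full_axioms_def, use a(6) a(7) in blast)
  show ?thesis by (rule final)
qed

end
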